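(* Let $\beta>0$, $c\ge0$, $a=\sqrt{\tfrac{\beta}{2}}\sqrt{1+\tfrac{2c}{\beta}-\sqrt{1+\tfrac{4c}{\beta}}}$, $b=\sqrt{\tfrac{\beta}{2}}\sqrt{1+\tfrac{2c}{\beta}+\sqrt{1+\tfrac{4c}{\beta}}}$, $S=[-b,-a]\cup[a,b]$, and let $\nu_{\beta,c}$ be the probability measure with density $\frac{2}{\pi\beta}\frac{1}{|t|}\sqrt{(t^2-a^2)(b^2-t^2)}$ on $S$ and $0$ off $S$. Let $f(z)=\frac{2}{\beta z}\sqrt{z-a}\sqrt{z-b}\sqrt{z+a}\sqrt{z+b}$ with principal-branch square roots, defined on $\mathbb{C}\setminus(-\infty,b]$. Then $f$ continues holomorphically to $\mathbb{C}\setminus(S\cup\{0\})$, and the Cauchy transform $G(z)=\int_{\mathbb{R}}\frac{1}{z-t}\,\nu_{\beta,c}(dt)$ satisfies, for all $z\in\mathbb{C}\setminus(S\cup\{0\})$, $$G(z)=-f(z)+\frac{2}{\beta}z-\frac{2c}{\beta z}.$$ *)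

theory Defs
  imports "HOL-Complex_Analysis.Complex_Analysis"
begin

definition edge_a :: "real \<Rightarrow> real \<Rightarrow> real" where
  "edge_a \<beta> c = sqrt (\<beta>/2) * sqrt (1 + 2*c/\<beta> - sqrt (1 + 4*c/\<beta>))"

definition edge_b :: "real \<Rightarrow> real \<Rightarrow> real" where
  "edge_b \<beta> c = sqrt (\<beta>/2) * sqrt (1 + 2*c/\<beta> + sqrt (1 + 4*c/\<beta>))"

definition supp_S :: "real \<Rightarrow> real \<Rightarrow> real set" where
  "supp_S \<beta> c = {-edge_b \<beta> c .. -edge_a \<beta> c} \<union> {edge_a \<beta> c .. edge_b \<beta> c}"

definition nu_dens :: "real \<Rightarrow> real \<Rightarrow> real \<Rightarrow> real" where
  "nu_dens \<beta> c t =
     (if t \<in> supp_S \<beta> c then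
        2 / (pi * \<beta>) * (1 / \<bar>t\<bar>) *
          sqrt ((t^2 - (edge_a \<beta> c)^2) * ((edge_b \<beta> c)^2 - t^2))
      else 0)"

definition nu :: "real \<Rightarrow> real \<Rightarrow> real measure" where
  "nu \<beta> c = density lborel (\<lambda>t. ennreal (nu_dens \<beta> c t))"

definition cauchy_G :: "real \<Rightarrow> real \<Rightarrow> complex \<Rightarrow> complex" where
  "cauchy_G \<beta> c z = (\<integral>t. 1 / (z - complex_of_real t) \<partial>(nu \<beta> c))"

definition f_branch :: "real \<Rightarrow> real \<Rightarrow> complex \<Rightarrow> complex" where
  "f_branch \<beta> c z =
     2 / (complex_of_real \<beta> * z) *
       csqrt (z - of_real (edge_a \<beta> c)) * csqrt (z - of_real (edge_b \<beta> c)) *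
       csqrt (z + of_real (edge_a \<beta> c)) * csqrt (z + of_real (edge_b \<beta> c))"

end

theory Submission
  imports Defs
begin


lemma alg2: fixes s q y d :: real
  assumes "s > 0" "q > 0" "y > 0" "d > 0"
  shows "inverse (2 * s * q/(y * d)) * (2 * (s * s)/(y^2 * d)) = s/(y * q)"
  using assms by (simp add: field_simps power2_eq_square)
lemma alg1: fixes q d :: real
  assumes "q > 0" "d > 0"
  shows "inverse (2 * q/d) * (2/d) = 1/q"
  using assms by (simp add: field_simps power2_eq_square)

lemma arc2_deriv:
  fixes P R y :: real
  assumes "0 < P" "P < y" "y < R"
  shows "((\<lambda>y. arcsin (((P+R) * y - 2 * P * R)/(y * (R-P)))) has_real_derivative
           sqrt (P * R) / (y * sqrt ((y-P) * (R-y)))) (at y)"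
proof -
  define h where "h y = ((P+R) * y - 2 * P * R)/(y * (R-P))" for y
  have v0: "y > 0" "R - P > 0" using assms by auto
  have h1: "1 - h y = 2 * P * (R-y)/(y * (R-P))" "1 + h y = 2 * R * (y-P)/(y * (R-P))"
    using v0 by (auto simp: h_def field_simps)
  have hb: "-1 < h y" "h y < 1"
  proof -
    have "2 * P * (R-y)/(y * (R-P)) > 0" "2 * R * (y-P)/(y * (R-P)) > 0" using assms v0 by auto
    then show "-1 < h y" "h y < 1" using h1 by linarith+
  qed
  have sq: "1 - (h y)^2 = (2 * sqrt (P * R) * sqrt ((y-P) * (R-y))/(y * (R-P)))^2"
  proof -
    have "1 - (h y)^2 = (1 - h y) * (1 + h y)" by (simp add: power2_eq_square algebra_simps)
    also have "\<dots> = 4 * (P * R) * ((y-P) * (R-y)) / (y * (R-P))^2" unfolding h1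
      by (simp add: power2_eq_square field_simps)
    also have "\<dots> = (2 * sqrt (P * R) * sqrt ((y-P) * (R-y))/(y * (R-P)))^2"
      using assms by (simp add: power_divide power_mult_distrib)
    finally show ?thesis .
  qed
  have pos: "2 * sqrt (P * R) * sqrt ((y-P) * (R-y))/(y * (R-P)) > 0" using assms v0 by auto
  have ssq: "sqrt (1 - (h y)^2) = 2 * sqrt (P * R) * sqrt ((y-P) * (R-y))/(y * (R-P))"
    unfolding sq real_sqrt_abs using abs_of_pos[OF pos] .
  have dh0: "(h has_real_derivative ((P+R) * (y * (R-P)) - ((P+R) * y - 2 * P * R) * (R-P)) / ((y * (R-P)) * (y * (R-P)))) (at y)"
    unfolding h_def using v0 by (auto intro!: derivative_eq_intros)
  have "(P+R) * (y * (R-P)) - ((P+R) * y - 2 * P * R) * (R-P) = 2 * P * R * (R-P)"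
    by (simp add: algebra_simps)
  then have "((P+R) * (y * (R-P)) - ((P+R) * y - 2 * P * R) * (R-P)) / ((y * (R-P)) * (y * (R-P))) = 2 * P * R/(y^2 * (R-P))"
    using v0 by (simp add: power2_eq_square)
  with dh0 have dh: "(h has_real_derivative 2 * P * R/(y^2 * (R-P))) (at y)" by simp
  have "((\<lambda>y. arcsin (h y)) has_real_derivative inverse (sqrt (1 - (h y)^2)) * (2 * P * R/(y^2 * (R-P)))) (at y)"
    by (rule DERIV_chain2[OF DERIV_arcsin[OF hb] dh])
  moreover have "inverse (sqrt (1 - (h y)^2)) * (2 * P * R/(y^2 * (R-P))) = sqrt (P * R) / (y * sqrt ((y-P) * (R-y)))"
  proof -
    have e: "2 * P * R = 2 * (sqrt (P * R) * sqrt (P * R))" using assms by simp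
    have "sqrt (P * R) > 0" "sqrt ((y-P) * (R-y)) > 0" using assms by auto
    then show ?thesis unfolding ssq e using v0 by (rule alg2)
  qed
  ultimately show ?thesis unfolding h_def by simp
qed

lemma arc1_deriv:
  fixes A B u :: real
  assumes "A < u" "u < B"
  shows "((\<lambda>u. arcsin ((2 * u - A - B)/(B-A))) has_real_derivative 1 / sqrt ((u-A) * (B-u))) (at u)"
proof -
  define h where "h u = (2 * u - A - B)/(B-A)" for u
  have v0: "B - A > 0" using assms by auto
  have h1: "1 - h u = 2 * (B-u)/(B-A)" "1 + h u = 2 * (u-A)/(B-A)"
    using v0 by (auto simp: h_def field_simps)
  have hb: "-1 < h u" "h u < 1"
  proof -
    have "2 * (B-u)/(B-A) > 0" "2 * (u-A)/(B-A) > 0" using assms v0 by auto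
    then show "-1 < h u" "h u < 1" using h1 by linarith+
  qed
  have sq: "1 - (h u)^2 = (2 * sqrt ((u-A) * (B-u))/(B-A))^2"
  proof -
    have "1 - (h u)^2 = (1 - h u) * (1 + h u)" by (simp add: power2_eq_square algebra_simps)
    also have "\<dots> = 4 * ((u-A) * (B-u)) / (B-A)^2" unfolding h1
      by (simp add: power2_eq_square field_simps)
    also have "\<dots> = (2 * sqrt ((u-A) * (B-u))/(B-A))^2"
      using assms by (simp add: power_divide power_mult_distrib)
    finally show ?thesis .
  qed
  have pos: "2 * sqrt ((u-A) * (B-u))/(B-A) > 0" using assms v0 by auto
  have ssq: "sqrt (1 - (h u)^2) = 2 * sqrt ((u-A) * (B-u))/(B-A)"
    unfolding sq real_sqrt_abs using abs_of_pos[OF pos] .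
  have dh: "(h has_real_derivative 2/(B-A)) (at u)"
    unfolding h_def using v0 by (auto intro!: derivative_eq_intros) (simp add: divide_simps)
  have "((\<lambda>u. arcsin (h u)) has_real_derivative inverse (sqrt (1 - (h u)^2)) * (2/(B-A))) (at u)"
    by (rule DERIV_chain2[OF DERIV_arcsin[OF hb] dh])
  moreover have "inverse (sqrt (1 - (h u)^2)) * (2/(B-A)) = 1 / sqrt ((u-A) * (B-u))"
    unfolding ssq using v0 assms by (intro alg1) auto
  ultimately show ?thesis unfolding h_def by simp
qed



lemma hbound2:
  fixes P R y :: real
  assumes "0 < P" "P \<le> y" "y \<le> R" "P < R"
  shows "-1 \<le> ((P+R) * y - 2 * P * R)/(y * (R-P))" "((P+R) * y - 2 * P * R)/(y * (R-P)) \<le> 1"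
proof -
  have y0: "y * (R - P) > 0" using assms by auto
  have "-1 * (y * (R-P)) \<le> ((P+R) * y - 2 * P * R)"
    using assms mult_nonneg_nonneg[of R "y-P"] by (simp add: algebra_simps)
  then show "-1 \<le> ((P+R) * y - 2 * P * R)/(y * (R-P))" using y0 by (simp add: le_divide_eq)
  have "((P+R) * y - 2 * P * R) \<le> 1 * (y * (R-P))"
    using assms mult_nonneg_nonneg[of P "R-y"] by (simp add: algebra_simps)
  then show "((P+R) * y - 2 * P * R)/(y * (R-P)) \<le> 1" using y0 by (simp add: divide_le_eq)
qed

lemma hbound1:
  fixes A B u :: real
  assumes "A \<le> u" "u \<le> B" "A < B"
  shows "-1 \<le> (2 * u - A - B)/(B-A)" "(2 * u - A - B)/(B-A) \<le> 1"
  using assms by (auto simp: le_divide_eq divide_le_eq)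

lemma hend2:
  fixes P R :: real
  assumes "0 < P" "P < R"
  shows "((P+R) * P - 2 * P * R)/(P * (R-P)) = -1" "((P+R) * R - 2 * P * R)/(R * (R-P)) = 1"
  using assms by (auto simp: divide_simps algebra_simps)

lemma alg_main:
  fixes u q A B W :: real
  assumes "q > 0" "q * q = (u-A) * (B-u)" "u > 0" "W - u \<noteq> 0" "W > 0"
  shows "1/q - (A * B)/(W * u * q) - (W-A) * (W-B)/(W * (W-u) * q) = q/(u * (W-u))"
proof -
  have e: "(u-A) * (B-u) = q * q" using assms(2) by simp
  have H: "1 - (A * B)/(W * u) - (W-A) * (W-B)/(W * (W-u)) = ((u-A) * (B-u))/(u * (W-u))"
    using assms by (simp add: field_simps)
  have "1/q - (A * B)/(W * u * q) - (W-A) * (W-B)/(W * (W-u) * q)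
     = (1 - (A * B)/(W * u) - (W-A) * (W-B)/(W * (W-u)))/q"
    by (simp add: diff_divide_distrib)
  also have "\<dots> = (q * q)/(u * (W-u))/q" unfolding H e ..
  also have "\<dots> = q/(u * (W-u))" using assms by (simp add: field_simps)
  finally show ?thesis .
qed



lemma sqrt_rho_eq:
  fixes t A B :: real
  assumes "t > 0"
  shows "sqrt ((1 - A/t^2) * (B - t^2)) = sqrt ((t^2 - A) * (B - t^2)) / t"
proof -
  have "(1 - A/t^2) * (B - t^2) = ((t^2 - A) * (B - t^2)) / t^2"
    using assms by (simp add: field_simps)
  then show ?thesis using assms by (simp add: real_sqrt_divide)
qed

lemma ftc_main:
  fixes a b x :: real
  assumes a0: "0 \<le> a" and ab: "a < b" and bx: "b < x"
  shows "((\<lambda>t. sqrt ((1 - a^2/t^2) * (b^2 - t^2)) * (2 * x/(x^2 - t^2))) has_integral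
           (x * pi * (1 - a * b/x^2 - sqrt ((x^2-a^2) * (x^2-b^2))/x^2))) {a..b}"
proof -
  define A where "A = a^2"
  define B where "B = b^2"
  define W where "W = x^2"
  define P3 where "P3 = W - B"
  define R3 where "R3 = W - A"
  define sq where "sq = sqrt (P3 * R3)"
  define h1 where "h1 u = (2 * u - A - B)/(B-A)" for u
  define h2 where "h2 u = ((A+B) * u - 2 * A * B)/(u * (B-A))" for u
  define h3 where "h3 y = ((P3+R3) * y - 2 * P3 * R3)/(y * (R3-P3))" for y
  define Phi where "Phi u = arcsin (h1 u) - (a * b/W) * arcsin (h2 u) + (sq/W) * arcsin (h3 (W-u))" for u
  define F where "F t = x * Phi (t^2)" for t
  have b0: "b > 0" using a0 ab by linarith
  have AB: "0 \<le> A" "A < B" unfolding A_def B_def using a0 ab by (auto intro: power_strict_mono)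
  have BW: "B < W" unfolding B_def W_def using b0 bx by (auto intro: power_strict_mono)
  have P3: "0 < P3" "P3 < R3" unfolding P3_def R3_def using AB BW by auto
  have W0: "W > 0" using AB BW by auto
  have sqab: "sqrt (A * B) = a * b" unfolding A_def B_def using a0 b0
    by (simp add: real_sqrt_mult)
  have R3P3: "R3 - P3 = B - A" "P3 + R3 = 2 * W - A - B" unfolding P3_def R3_def by auto
  have dPhi: "(Phi has_real_derivative sqrt ((u-A) * (B-u))/(u * (W-u))) (at u)"
    if u: "A < u" "u < B" for u
  proof -
    define q where "q = sqrt ((u-A) * (B-u))"
    have q0: "q > 0" unfolding q_def using u by auto
    have qq: "q * q = (u-A) * (B-u)" unfolding q_def using u by simp
    have u0: "u > 0" using u AB by linarith
    have d1: "((\<lambda>u. arcsin (h1 u)) has_real_derivative 1/q) (at u)"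
      unfolding h1_def q_def using arc1_deriv[OF u] .
    have d2: "((\<lambda>u. (a * b/W) * arcsin (h2 u)) has_real_derivative (a * b/W) * ((a * b)/(u * q))) (at u)"
    proof (cases "a = 0")
      case True then show ?thesis by simp
    next
      case False
      then have "A > 0" unfolding A_def using a0 by simp
      from arc2_deriv[OF this u] have "((\<lambda>u. arcsin (h2 u)) has_real_derivative (a * b)/(u * q)) (at u)"
        unfolding h2_def q_def sqab .
      then show ?thesis by (intro DERIV_cmult)
    qed
    have y: "P3 < W - u" "W - u < R3" unfolding P3_def R3_def using u by auto
    have d3a: "(h3' has_real_derivative sq/((W-u) * q)) (at (W-u))" if "h3' = (\<lambda>y. arcsin (h3 y))" for h3'
    proof -
      have "(W - u - P3) * (R3 - (W - u)) = (u-A) * (B-u)" unfolding P3_def R3_def by (simp add: algebra_simps)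
      then show ?thesis using arc2_deriv[OF P3(1) y] unfolding that h3_def sq_def q_def by simp
    qed
    have d3: "((\<lambda>u. (sq/W) * arcsin (h3 (W-u))) has_real_derivative (sq/W) * (sq/((W-u) * q) * (-1))) (at u)"
    proof -
      have dg: "((\<lambda>u. W - u) has_real_derivative -1) (at u)" by (auto intro!: derivative_eq_intros)
      have "((\<lambda>u. arcsin (h3 (W-u))) has_real_derivative sq/((W-u) * q) * (-1)) (at u)"
        using DERIV_chain2[where f="\<lambda>y. arcsin (h3 y)" and g="\<lambda>u. W - u", OF d3a[OF refl] dg] by simp
      then show ?thesis by (intro DERIV_cmult)
    qed
    have "(Phi has_real_derivative 1/q - (a * b/W) * ((a * b)/(u * q)) + (sq/W) * (sq/((W-u) * q) * (-1))) (at u)"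
      unfolding Phi_def by (intro DERIV_add DERIV_diff d1 d2 d3)
    moreover have "1/q - (a * b/W) * ((a * b)/(u * q)) + (sq/W) * (sq/((W-u) * q) * (-1)) = q/(u * (W-u))"
    proof -
      have "P3 * R3 > 0" using P3 by simp
      then have "sq * sq = P3 * R3" unfolding sq_def by simp
      then have "sq * sq = (W-A) * (W-B)" unfolding P3_def R3_def by (simp add: algebra_simps)
      moreover have "(a * b) * (a * b) = A * B" unfolding A_def B_def by (simp add: power2_eq_square)
      ultimately have "1/q - (a * b/W) * ((a * b)/(u * q)) + (sq/W) * (sq/((W-u) * q) * (-1))
         = 1/q - (A * B)/(W * u * q) - (W-A) * (W-B)/(W * (W-u) * q)"
        by (simp add: field_simps)
      also have "\<dots> = q/(u * (W-u))"
        by (rule alg_main[OF q0 qq u0]) (use u BW W0 in auto)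
      finally show ?thesis .
    qed
    ultimately show ?thesis unfolding q_def by simp
  qed
  have tpos: "A < t^2" "t^2 < B" "t > 0" if t: "t \<in> {a<..<b}" for t
  proof -
    show "t > 0" using t a0 by auto
    show "A < t^2" unfolding A_def using t a0 by (auto intro: power_strict_mono)
    show "t^2 < B" unfolding B_def using t a0 by (auto intro: power_strict_mono)
  qed
  have tcl: "A \<le> t^2" "t^2 \<le> B" if t: "t \<in> {a..b}" for t
  proof -
    show "A \<le> t^2" unfolding A_def using t a0 by (auto intro: power_mono)
    show "t^2 \<le> B" unfolding B_def using t a0 by (auto intro: power_mono)
  qed
  have dF: "(F has_vector_derivative sqrt ((1 - a^2/t^2) * (b^2 - t^2)) * (2 * x/(x^2 - t^2))) (at t)"
    if t: "t \<in> {a<..<b}" for t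
  proof -
    note tt = tpos[OF t]
    have dsq: "((\<lambda>t. t^2) has_real_derivative 2 * t) (at t)" by (auto intro!: derivative_eq_intros)
    have "((\<lambda>t. Phi (t^2)) has_real_derivative sqrt ((t^2-A) * (B-t^2))/(t^2 * (W-t^2)) * (2 * t)) (at t)"
      using DERIV_chain2[where f=Phi and g="\<lambda>t. t^2", OF dPhi[OF tt(1,2)] dsq] by simp
    then have "(F has_real_derivative x * (sqrt ((t^2-A) * (B-t^2))/(t^2 * (W-t^2)) * (2 * t))) (at t)"
      unfolding F_def by (intro DERIV_cmult)
    moreover have "x * (sqrt ((t^2-A) * (B-t^2))/(t^2 * (W-t^2)) * (2 * t)) =
        sqrt ((1 - a^2/t^2) * (b^2 - t^2)) * (2 * x/(x^2 - t^2))"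
    proof -
      have "W - t^2 > 0" using tt BW by linarith
      then show ?thesis unfolding sqrt_rho_eq[OF tt(3)] A_def[symmetric] B_def[symmetric] W_def[symmetric]
        using tt by (simp add: field_simps power2_eq_square)
    qed
    ultimately show ?thesis by (simp add: has_real_derivative_iff_has_vector_derivative)
  qed
  have cont: "continuous_on {a..b} F"
  proof -
    have c1: "continuous_on {a..b} (\<lambda>t. arcsin (h1 (t^2)))"
      unfolding h1_def using tcl hbound1[OF _ _ AB(2)] AB
      by (intro continuous_intros) auto
    have c2: "continuous_on {a..b} (\<lambda>t. (a * b/W) * arcsin (h2 (t^2)))"
    proof (cases "a = 0")
      case True then show ?thesis by simp
    next
      case False
      then have A0: "A > 0" unfolding A_def using a0 by simp
      have nz: "t^2 * (B - A) \<noteq> 0" if "t \<in> {a..b}" for t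
        using tcl[OF that] A0 AB by auto
      show ?thesis unfolding h2_def using tcl hbound2[OF A0 _ _ AB(2)] nz
        by (intro continuous_intros) auto
    qed
    have c3: "continuous_on {a..b} (\<lambda>t. (sq/W) * arcsin (h3 (W - t^2)))"
    proof -
      have ineq: "P3 \<le> W - t^2" "W - t^2 \<le> R3" if "t \<in> {a..b}" for t
        using tcl[OF that] unfolding P3_def R3_def by auto
      have nz: "(W - t^2) * (R3 - P3) \<noteq> 0" if "t \<in> {a..b}" for t
        using ineq[OF that] P3 by auto
      show ?thesis unfolding h3_def using ineq hbound2[OF P3(1) _ _ P3(2)] nz
        by (intro continuous_intros) auto
    qed
    have "continuous_on {a..b} (\<lambda>t. x * (arcsin (h1 (t^2)) - (a * b/W) * arcsin (h2 (t^2)) + (sq/W) * arcsin (h3 (W - t^2))))"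
      by (intro continuous_intros c1 c2 c3)
    then show ?thesis unfolding F_def Phi_def .
  qed
  have Fab: "F b - F a = x * pi * (1 - a * b/x^2 - sqrt ((x^2-a^2) * (x^2-b^2))/x^2)"
  proof -
    have e1: "h1 B = 1" "h1 A = -1" unfolding h1_def using AB by (auto simp: divide_simps)
    have e3: "h3 (W - B) = -1" "h3 (W - A) = 1" using hend2[OF P3] unfolding h3_def P3_def R3_def by auto
    have e2: "(a * b/W) * arcsin (h2 B) - (a * b/W) * arcsin (h2 A) = (a * b/W) * pi"
    proof (cases "a = 0")
      case True then show ?thesis by simp
    next
      case False
      then have A0: "A > 0" unfolding A_def using a0 by simp
      have "h2 B = 1" "h2 A = -1" using hend2[OF A0 AB(2)] unfolding h2_def by auto
      then show ?thesis by (simp add: algebra_simps)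
    qed
    have sqe: "sq = sqrt ((x^2-a^2) * (x^2-b^2))" unfolding sq_def P3_def R3_def W_def A_def B_def
      by (simp add: mult.commute)
    have "F b - F a = x * (Phi B - Phi A)" unfolding F_def A_def B_def by (simp add: algebra_simps)
    also have "Phi B - Phi A = pi - (a * b/W) * pi - (sq/W) * pi"
      unfolding Phi_def using e1 e2 e3 by (simp add: algebra_simps)
    finally show ?thesis unfolding sqe W_def by (simp add: algebra_simps)
  qed
  have "((\<lambda>t. sqrt ((1 - a^2/t^2) * (b^2 - t^2)) * (2 * x/(x^2 - t^2))) has_integral (F b - F a)) {a..b}"
    by (rule fundamental_theorem_of_calculus_interior[OF _ cont dF]) (use ab in auto)
  then show ?thesis unfolding Fab .
qed



lemma holo_cauchy:
  fixes \<phi> :: "real \<Rightarrow> real" and p q :: real and U :: "complex set"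
  assumes cphi: "continuous_on {p..q} \<phi>" and U: "open U"
    and nz: "\<And>z t. z \<in> U \<Longrightarrow> t \<in> {p..q} \<Longrightarrow> z \<noteq> of_real t"
  shows "(\<lambda>z. integral {p..q} (\<lambda>t. of_real (\<phi> t) / (z - of_real t))) holomorphic_on U"
proof -
  have deriv: "((\<lambda>z. integral {p..q} (\<lambda>t. of_real (\<phi> t) / (z - of_real t))) has_field_derivative
          integral {p..q} (\<lambda>t. - of_real (\<phi> t) / (z0 - of_real t)^2)) (at z0)" if z0: "z0 \<in> U" for z0
  proof -
    obtain r where r: "r > 0" "ball z0 r \<subseteq> U" using U z0 open_contains_ball by blast
    have nzb: "z \<noteq> of_real t" if "z \<in> ball z0 r" "t \<in> {p..q}" for z t
      using nz[of z t] that r by blast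
    have "((\<lambda>z. integral (cbox p q) (\<lambda>t. of_real (\<phi> t) / (z - of_real t))) has_field_derivative
          integral (cbox p q) (\<lambda>t. - of_real (\<phi> t) / (z0 - of_real t)^2)) (at z0 within ball z0 r)"
    proof (rule leibniz_rule_field_derivative[where fx="\<lambda>z t. - of_real (\<phi> t) / (z - of_real t)^2"])
      fix z t assume zt: "z \<in> ball z0 r" "t \<in> cbox p q"
      then have "z \<in> U" "t \<in> {p..q}" using r by auto
      then have "z - of_real t \<noteq> 0" using nz by auto
      then show "((\<lambda>z. of_real (\<phi> t) / (z - of_real t)) has_field_derivative - of_real (\<phi> t) / (z - of_real t)^2) (at z within ball z0 r)"
        by (auto intro!: derivative_eq_intros simp: power2_eq_square)
    next
      fix z assume z: "z \<in> ball z0 r"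
      have "continuous_on {p..q} (\<lambda>t. of_real (\<phi> t) / (z - of_real t))"
        using z nzb by (intro continuous_intros cphi) auto
      then show "(\<lambda>t. of_real (\<phi> t) / (z - of_real t)) integrable_on cbox p q"
        using integrable_continuous_interval by auto
    next
      have c1: "continuous_on (ball z0 r \<times> {p..q}) (\<lambda>x. \<phi> (snd x))"
        by (rule continuous_on_compose2[OF cphi continuous_on_snd]) auto
      have c2: "continuous_on (ball z0 r \<times> {p..q}) (\<lambda>x. (fst x - of_real (snd x))^2)"
        by (intro continuous_intros)
      have c3: "\<forall>x\<in>ball z0 r \<times> {p..q}. (fst x - of_real (snd x))^2 \<noteq> 0"
        using nzb by auto
      have "continuous_on (ball z0 r \<times> {p..q}) (\<lambda>x. - of_real (\<phi> (snd x)) / (fst x - of_real (snd x))^2)"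
        by (rule continuous_on_divide[OF continuous_on_minus[OF continuous_on_of_real[OF c1]] c2 c3])
      then show "continuous_on (ball z0 r \<times> cbox p q) (\<lambda>(z, t). - of_real (\<phi> t) / (z - of_real t)^2)"
        unfolding case_prod_beta by simp
    qed (use r in auto)
    moreover have "at z0 within ball z0 r = at z0" using r by (intro at_within_open) auto
    ultimately show ?thesis unfolding cbox_interval by simp
  qed
  show ?thesis unfolding holomorphic_on_def
  proof
    fix z assume "z \<in> U"
    from deriv[OF this] show "(\<lambda>z. integral {p..q} (\<lambda>t. of_real (\<phi> t) / (z - of_real t))) field_differentiable (at z within U)"
      unfolding field_differentiable_def by (blast intro: has_field_derivative_at_within)
  qed
qed



lemma edges:
  fixes \<beta> c :: real
  assumes b: "\<beta> > 0" and c: "c \<ge> 0"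
  shows "0 \<le> edge_a \<beta> c" "edge_a \<beta> c < edge_b \<beta> c" "edge_a \<beta> c * edge_b \<beta> c = c"
proof -
  define r where "r = sqrt (1 + 4 * c/\<beta>)"
  define k where "k = 1 + 2 * c/\<beta>"
  have r1: "r \<ge> 1" unfolding r_def using b c by auto
  have kk: "k^2 = (1 + 4 * c/\<beta>) + (2 * c/\<beta>)^2" unfolding k_def by (simp add: power2_eq_square algebra_simps)
  have k0: "k \<ge> 0" unfolding k_def using b c by auto
  have rr: "r^2 = 1 + 4 * c/\<beta>" unfolding r_def using b c by simp
  have "r \<le> k"
  proof -
    have "r^2 \<le> k^2" using kk rr by simp
    then show ?thesis using k0 r1 by (simp add: power2_le_iff_abs_le)
  qed
  have ea: "edge_a \<beta> c = sqrt (\<beta>/2) * sqrt (k - r)" unfolding edge_a_def k_def r_def by simp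
  have eb: "edge_b \<beta> c = sqrt (\<beta>/2) * sqrt (k + r)" unfolding edge_b_def k_def r_def by simp
  show "0 \<le> edge_a \<beta> c" unfolding ea using \<open>r \<le> k\<close> b by simp
  show "edge_a \<beta> c < edge_b \<beta> c" unfolding ea eb using \<open>r \<le> k\<close> b r1 by simp
  have "edge_a \<beta> c * edge_b \<beta> c = (\<beta>/2) * sqrt ((k - r) * (k + r))"
  proof -
    have "edge_a \<beta> c * edge_b \<beta> c = (sqrt (\<beta>/2) * sqrt (\<beta>/2)) * (sqrt (k - r) * sqrt (k + r))"
      unfolding ea eb by (simp only: mult_ac)
    also have "sqrt (k - r) * sqrt (k + r) = sqrt ((k - r) * (k + r))" by (simp only: real_sqrt_mult)
    also have "sqrt (\<beta>/2) * sqrt (\<beta>/2) = \<beta>/2" using b by simp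
    finally show ?thesis .
  qed
  also have "(k - r) * (k + r) = (2 * c/\<beta>)^2" using kk rr by (simp add: algebra_simps power2_eq_square)
  also have "(\<beta>/2) * sqrt ((2 * c/\<beta>)^2) = c" using b c by simp
  finally show "edge_a \<beta> c * edge_b \<beta> c = c" .
qed



lemma sqrt_rho_abs:
  fixes t A B :: real
  assumes "t \<noteq> 0"
  shows "sqrt ((1 - A/t^2) * (B - t^2)) = sqrt ((t^2 - A) * (B - t^2)) / \<bar>t\<bar>"
  using sqrt_rho_eq[of "\<bar>t\<bar>" A B] assms by simp

definition rhoc :: "real \<Rightarrow> real \<Rightarrow> real \<Rightarrow> real" where
  "rhoc \<beta> c t = 2/(pi * \<beta>) * sqrt ((1 - (edge_a \<beta> c)^2/t^2) * ((edge_b \<beta> c)^2 - t^2))"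

lemma rhoc_cont:
  assumes "\<beta> > 0" "c \<ge> 0"
  shows "continuous_on {edge_a \<beta> c..edge_b \<beta> c} (rhoc \<beta> c)"
    "continuous_on {-edge_b \<beta> c..-edge_a \<beta> c} (rhoc \<beta> c)"
proof -
  let ?a = "edge_a \<beta> c" and ?b = "edge_b \<beta> c"
  have a0: "?a \<ge> 0" using edges[OF assms] by simp
  show "continuous_on {?a..?b} (rhoc \<beta> c)"
  proof (cases "?a = 0")
    case True then show ?thesis unfolding rhoc_def using assms by (simp add: True) (intro continuous_intros, auto)
  next
    case False
    then have "\<forall>t\<in>{?a..?b}. t^2 \<noteq> 0" using a0 by auto
    then show ?thesis unfolding rhoc_def by (intro continuous_intros) auto
  qed
  show "continuous_on {-?b..-?a} (rhoc \<beta> c)"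
  proof (cases "?a = 0")
    case True then show ?thesis unfolding rhoc_def using assms by (simp add: True) (intro continuous_intros, auto)
  next
    case False
    then have "\<forall>t\<in>{-?b..-?a}. t^2 \<noteq> 0" using a0 by auto
    then show ?thesis unfolding rhoc_def by (intro continuous_intros) auto
  qed
qed

lemma nu_dens_meas: "nu_dens \<beta> c \<in> borel_measurable lborel"
  unfolding nu_dens_def supp_S_def by measurable

lemma nu_dens_meas': "nu_dens \<beta> c \<in> borel_measurable borel"
  using nu_dens_meas[of \<beta> c] by simp



lemma G_repr:
  fixes \<beta> c :: real and z :: complex
  assumes b: "\<beta> > 0" and c: "c \<ge> 0" and z: "z \<notin> complex_of_real ` supp_S \<beta> c"
  shows "cauchy_G \<beta> c z =
    integral {-edge_b \<beta> c..-edge_a \<beta> c} (\<lambda>t. of_real (rhoc \<beta> c t) / (z - of_real t)) +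
    integral {edge_a \<beta> c..edge_b \<beta> c} (\<lambda>t. of_real (rhoc \<beta> c t) / (z - of_real t))"
proof -
  define a where "a = edge_a \<beta> c"
  define bb where "bb = edge_b \<beta> c"
  define k where "k t = of_real (rhoc \<beta> c t) / (z - of_real t)" for t
  have a0: "0 \<le> a" and ab: "a < bb" using edges[OF b c] unfolding a_def bb_def by auto
  have S: "supp_S \<beta> c = {-bb..-a} \<union> {a..bb}" unfolding supp_S_def a_def bb_def ..
  have znz: "z - of_real t \<noteq> 0" if "t \<in> supp_S \<beta> c" for t
    using z that by auto
  have ck1: "continuous_on {-bb..-a} k"
    unfolding k_def using rhoc_cont[OF b c] znz unfolding a_def bb_def S
    by (intro continuous_intros) (auto simp: a_def bb_def)
  have ck2: "continuous_on {a..bb} k"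
    unfolding k_def using rhoc_cont[OF b c] znz unfolding a_def bb_def S
    by (intro continuous_intros) (auto simp: a_def bb_def)
  have si1: "set_integrable lborel {-bb..-a} k" by (rule borel_integrable_atLeastAtMost'[OF ck1])
  have si2: "set_integrable lborel {a..bb} k" by (rule borel_integrable_atLeastAtMost'[OF ck2])
  have i1: "integrable lborel (\<lambda>t. indicator {-bb..-a} t *\<^sub>R k t)" using si1 unfolding set_integrable_def .
  have i2: "integrable lborel (\<lambda>t. indicator {a..bb} t *\<^sub>R k t)" using si2 unfolding set_integrable_def .
  have ndpos: "0 \<le> nu_dens \<beta> c t" for t
  proof (cases "t \<in> supp_S \<beta> c")
    case True
    then have h: "a \<le> \<bar>t\<bar>" "\<bar>t\<bar> \<le> bb" unfolding S using a0 by auto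
    have "a^2 \<le> \<bar>t\<bar>^2" "\<bar>t\<bar>^2 \<le> bb^2"
      using power_mono[OF h(1) a0, of 2] power_mono[OF h(2) abs_ge_zero, of 2] by auto
    then have "0 \<le> (t^2 - a^2) * (bb^2 - t^2)" by simp
    then show ?thesis unfolding nu_dens_def a_def bb_def using b by simp
  qed (simp add: nu_dens_def)
  have "cauchy_G \<beta> c z = (\<integral>t. nu_dens \<beta> c t *\<^sub>R (1 / (z - complex_of_real t)) \<partial>lborel)"
    unfolding cauchy_G_def nu_def
    by (rule integral_density) (auto simp: nu_dens_meas nu_dens_meas' ndpos)
  also have "\<dots> = (\<integral>t. indicator {-bb..-a} t *\<^sub>R k t + indicator {a..bb} t *\<^sub>R k t \<partial>lborel)"
  proof (rule integral_cong_AE)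
    show "(\<lambda>t. nu_dens \<beta> c t *\<^sub>R (1 / (z - complex_of_real t))) \<in> borel_measurable lborel"
      using nu_dens_meas by measurable
    show "(\<lambda>t. indicator {-bb..-a} t *\<^sub>R k t + indicator {a..bb} t *\<^sub>R k t) \<in> borel_measurable lborel"
      using i1 i2 by auto
    show "AE t in lborel. nu_dens \<beta> c t *\<^sub>R (1 / (z - complex_of_real t)) =
        indicator {-bb..-a} t *\<^sub>R k t + indicator {a..bb} t *\<^sub>R k t"
      using AE_lborel_singleton[of 0]
    proof (rule eventually_mono)
      fix t :: real assume t0: "t \<noteq> 0"
      have rho: "rhoc \<beta> c t = 2/(pi * \<beta>) * (1/\<bar>t\<bar>) * sqrt ((t^2 - a^2) * (bb^2 - t^2))"
        unfolding rhoc_def sqrt_rho_abs[OF t0] a_def bb_def by simp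
      show "nu_dens \<beta> c t *\<^sub>R (1 / (z - complex_of_real t)) =
          indicator {-bb..-a} t *\<^sub>R k t + indicator {a..bb} t *\<^sub>R k t"
      proof (cases "t \<in> {a..bb}")
        case True
        then have "t \<notin> {-bb..-a}" using t0 a0 by auto
        moreover have "t \<in> supp_S \<beta> c" using True S by auto
        ultimately show ?thesis using True unfolding nu_dens_def k_def rho a_def bb_def
          by (simp add: scaleR_conv_of_real)
      next
        case False
        show ?thesis
        proof (cases "t \<in> {-bb..-a}")
          case True
          moreover have "t \<in> supp_S \<beta> c" using True S by auto
          ultimately show ?thesis using False unfolding nu_dens_def k_def rho a_def bb_def
            by (simp add: scaleR_conv_of_real)
        next
          case F2: False
          then have "t \<notin> supp_S \<beta> c" using False S by auto
          then show ?thesis using False F2 unfolding nu_dens_def by simp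
        qed
      qed
    qed
  qed
  also have "\<dots> = (\<integral>t. indicator {-bb..-a} t *\<^sub>R k t \<partial>lborel) + (\<integral>t. indicator {a..bb} t *\<^sub>R k t \<partial>lborel)"
    using i1 i2 by simp
  also have "\<dots> = integral {-bb..-a} k + integral {a..bb} k"
    using set_borel_integral_eq_integral(2)[OF si1] set_borel_integral_eq_integral(2)[OF si2]
    unfolding set_lebesgue_integral_def by simp
  finally show ?thesis unfolding k_def a_def bb_def .
qed



lemma slit_mem: "z \<in> complex_of_real ` {..b} \<longleftrightarrow> Im z = 0 \<and> Re z \<le> b"
proof
  assume "z \<in> complex_of_real ` {..b}" then show "Im z = 0 \<and> Re z \<le> b" by auto
next
  assume h: "Im z = 0 \<and> Re z \<le> b"
  then have "z = complex_of_real (Re z)" by (simp add: complex_eq_iff)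
  then show "z \<in> complex_of_real ` {..b}" using h by blast
qed

lemma conv_pos:
  fixes u p q :: real
  assumes "0 \<le> u" "u \<le> 1" "p > 0" "q > 0"
  shows "(1 - u) * p + u * q > 0"
proof -
  define d where "d = min p q"
  have d: "d > 0" "d \<le> p" "d \<le> q" using assms unfolding d_def by auto
  have "(1 - u) * d \<le> (1 - u) * p" using d assms by (intro mult_left_mono) auto
  moreover have "u * d \<le> u * q" using d assms by (intro mult_left_mono) auto
  moreover have "(1 - u) * d + u * d = d" by (simp add: algebra_simps)
  ultimately show ?thesis using d by linarith
qed

lemma slit_connected: "connected (- (complex_of_real ` {..b}))"
proof -
  have mem: "z \<in> - (complex_of_real ` {..b}) \<longleftrightarrow> Im z \<noteq> 0 \<or> Re z > b" for z
    using slit_mem[of z b] by auto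
  have "starlike (- (complex_of_real ` {..b}))"
    unfolding starlike_def
  proof (intro bexI ballI subsetI)
    show "complex_of_real (b+1) \<in> - (complex_of_real ` {..b})" unfolding mem by simp
    fix x y assume x: "x \<in> - (complex_of_real ` {..b})" and y: "y \<in> closed_segment (complex_of_real (b+1)) x"
    then obtain u where u: "0 \<le> u" "u \<le> 1" "y = (1 - u) *\<^sub>R complex_of_real (b+1) + u *\<^sub>R x"
      unfolding in_segment by blast
    have Imy: "Im y = u * Im x" and Rey: "Re y = (1 - u) * (b+1) + u * Re x" using u(3) by auto
    show "y \<in> - (complex_of_real ` {..b})" unfolding mem
    proof (cases "Im x \<noteq> 0")
      case True
      show "Im y \<noteq> 0 \<or> b < Re y"
      proof (cases "u = 0")
        case True then show ?thesis using Rey by simp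
      next
        case False then show ?thesis using Imy \<open>Im x \<noteq> 0\<close> by simp
      qed
    next
      case False
      then have "Re x > b" using x mem by auto
      have "(1 - u) * 1 + u * (Re x - b) > 0" using conv_pos[OF u(1,2), of 1 "Re x - b"] \<open>Re x > b\<close> by simp
      then have "Re y > b" unfolding Rey by (simp add: algebra_simps)
      then show "Im y \<noteq> 0 \<or> b < Re y" by simp
    qed
  qed
  then show ?thesis by (rule starlike_imp_connected)
qed

lemma G_real:
  fixes \<beta> c x :: real
  assumes b: "\<beta> > 0" and c: "c \<ge> 0" and x: "x > edge_b \<beta> c"
  shows "integral {-edge_b \<beta> c..-edge_a \<beta> c} (\<lambda>t. of_real (rhoc \<beta> c t) / (complex_of_real x - of_real t)) +
    integral {edge_a \<beta> c..edge_b \<beta> c} (\<lambda>t. of_real (rhoc \<beta> c t) / (complex_of_real x - of_real t))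
    = of_real (2/(pi * \<beta>) * (x * pi * (1 - edge_a \<beta> c * edge_b \<beta> c/x^2
         - sqrt ((x^2 - (edge_a \<beta> c)^2) * (x^2 - (edge_b \<beta> c)^2))/x^2)))"
proof -
  define a where "a = edge_a \<beta> c"
  define bb where "bb = edge_b \<beta> c"
  define k where "k t = of_real (rhoc \<beta> c t) / (complex_of_real x - of_real t)" for t
  have a0: "0 \<le> a" and ab: "a < bb" using edges[OF b c] unfolding a_def bb_def by auto
  have xb: "bb < x" using x unfolding bb_def .
  have ck1: "continuous_on {-bb..-a} k"
    unfolding k_def using rhoc_cont[OF b c] xb a0 unfolding a_def bb_def
    by (intro continuous_intros) (auto simp: a_def bb_def)
  have ck2: "continuous_on {a..bb} k"
    unfolding k_def using rhoc_cont[OF b c] xb unfolding a_def bb_def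
    by (intro continuous_intros) (auto simp: a_def bb_def)
  have ck3: "continuous_on {a..bb} (\<lambda>t. k (-t))"
    by (rule continuous_on_compose2[OF ck1]) (auto intro: continuous_intros)
  have "integral {-bb..-a} k = integral {a..bb} (\<lambda>t. k (-t))"
    using Henstock_Kurzweil_Integration.integral_reflect_real[of bb a "\<lambda>t. k (-t)"] by simp
  then have "integral {-bb..-a} k + integral {a..bb} k = integral {a..bb} (\<lambda>t. k (-t) + k t)"
    using integral_add[OF integrable_continuous_interval[OF ck3] integrable_continuous_interval[OF ck2]]
    by simp
  also have "\<dots> = integral {a..bb} (\<lambda>t. of_real (2/(pi * \<beta>) * (sqrt ((1 - a^2/t^2) * (bb^2 - t^2)) * (2 * x/(x^2 - t^2)))))"
  proof (rule integral_cong)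
    fix t assume t: "t \<in> {a..bb}"
    then have "x - t \<noteq> 0" "x + t \<noteq> 0" using xb a0 by auto
    have rr: "rhoc \<beta> c (-t) = rhoc \<beta> c t" unfolding rhoc_def by simp
    have "k (-t) + k t = of_real (rhoc \<beta> c t / (x + t) + rhoc \<beta> c t / (x - t))"
      unfolding k_def rr by (simp add: add.commute)
    also have "rhoc \<beta> c t / (x + t) + rhoc \<beta> c t / (x - t) = rhoc \<beta> c t * (2 * x/(x^2 - t^2))"
      using \<open>x - t \<noteq> 0\<close> \<open>x + t \<noteq> 0\<close> by (simp add: field_simps power2_eq_square)
    finally show "k (-t) + k t = of_real (2/(pi * \<beta>) * (sqrt ((1 - a^2/t^2) * (bb^2 - t^2)) * (2 * x/(x^2 - t^2))))"
      unfolding rhoc_def a_def bb_def by (simp add: mult.assoc)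
  qed
  also have "\<dots> = of_real (2/(pi * \<beta>) * (x * pi * (1 - a * bb/x^2 - sqrt ((x^2-a^2) * (x^2-bb^2))/x^2)))"
    by (rule integral_unique[OF has_integral_of_real[OF has_integral_mult_right[OF ftc_main[OF a0 ab xb]]]])
  finally show ?thesis unfolding k_def a_def bb_def .
qed



theorem proposition4p4:
  fixes \<beta> c :: real
  assumes "\<beta> > 0" and "c \<ge> 0"
  shows "\<exists>g. g holomorphic_on (- (complex_of_real ` supp_S \<beta> c \<union> {0})) \<and>
             (\<forall>z \<in> - (complex_of_real ` {..edge_b \<beta> c}). g z = f_branch \<beta> c z) \<and>
             (\<forall>z \<in> - (complex_of_real ` supp_S \<beta> c \<union> {0}).
                cauchy_G \<beta> c z = - g z + 2 / complex_of_real \<beta> * z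
                                  - 2 * complex_of_real c / (complex_of_real \<beta> * z))"
proof -
  note b = assms(1) and c = assms(2)
  define a where "a = edge_a \<beta> c"
  define bb where "bb = edge_b \<beta> c"
  have a0: "0 \<le> a" and ab: "a < bb" and abc: "a * bb = c" using edges[OF b c] unfolding a_def bb_def by auto
  have S: "supp_S \<beta> c = {-bb..-a} \<union> {a..bb}" unfolding supp_S_def a_def bb_def ..
  define \<Omega>0 where "\<Omega>0 = - (complex_of_real ` supp_S \<beta> c \<union> {0})"
  define \<Omega> where "\<Omega> = - (complex_of_real ` {..bb})"
  define H :: "complex \<Rightarrow> complex" where "H z = integral {-bb..-a} (\<lambda>t. of_real (rhoc \<beta> c t) / (z - of_real t)) +
    integral {a..bb} (\<lambda>t. of_real (rhoc \<beta> c t) / (z - of_real t))" for z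
  define g :: "complex \<Rightarrow> complex" where "g z = - cauchy_G \<beta> c z + 2 / complex_of_real \<beta> * z
                                  - 2 * complex_of_real c / (complex_of_real \<beta> * z)" for z
  have open0: "open \<Omega>0"
  proof -
    have "compact (supp_S \<beta> c)" unfolding S by (intro compact_Un compact_Icc)
    then have "compact (complex_of_real ` supp_S \<beta> c)"
      by (intro compact_continuous_image continuous_intros)
    then have "closed (complex_of_real ` supp_S \<beta> c \<union> {0})" by (intro closed_Un compact_imp_closed) auto
    then show ?thesis unfolding \<Omega>0_def by (simp add: open_Compl)
  qed
  have nzS: "z \<noteq> of_real t" if "z \<in> \<Omega>0" "t \<in> supp_S \<beta> c" for z t
    using that unfolding \<Omega>0_def by auto
  have Hholo: "H holomorphic_on \<Omega>0"
    unfolding H_def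
  proof (intro holomorphic_on_add)
    show "(\<lambda>z. integral {-bb..-a} (\<lambda>t. of_real (rhoc \<beta> c t) / (z - of_real t))) holomorphic_on \<Omega>0"
      by (rule holo_cauchy[OF rhoc_cont(2)[OF b c, folded a_def bb_def] open0]) (use nzS S in auto)
    show "(\<lambda>z. integral {a..bb} (\<lambda>t. of_real (rhoc \<beta> c t) / (z - of_real t))) holomorphic_on \<Omega>0"
      by (rule holo_cauchy[OF rhoc_cont(1)[OF b c, folded a_def bb_def] open0]) (use nzS S in auto)
  qed
  have GH: "cauchy_G \<beta> c z = H z" if "z \<in> \<Omega>0" for z
    unfolding H_def a_def bb_def by (rule G_repr[OF b c]) (use that in \<open>auto simp: \<Omega>0_def\<close>)
  have gholo: "g holomorphic_on \<Omega>0"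
  proof (rule holomorphic_transform)
    show "(\<lambda>z. - H z + 2 / complex_of_real \<beta> * z - 2 * complex_of_real c / (complex_of_real \<beta> * z)) holomorphic_on \<Omega>0"
      using b by (intro holomorphic_intros Hholo) (auto simp: \<Omega>0_def)
    show "- H z + 2 / complex_of_real \<beta> * z - 2 * complex_of_real c / (complex_of_real \<beta> * z) = g z"
      if "z \<in> \<Omega>0" for z unfolding g_def GH[OF that] ..
  qed
  have memO: "z \<in> \<Omega> \<longleftrightarrow> Im z \<noteq> 0 \<or> Re z > bb" for z
    unfolding \<Omega>_def using slit_mem[of z bb] by auto
  have openO: "open \<Omega>"
  proof -
    have "closed {z. Im z = 0 \<and> Re z \<le> bb}"
      by (intro closed_Collect_conj closed_Collect_eq closed_Collect_le continuous_intros)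
    moreover have "\<Omega> = - {z. Im z = 0 \<and> Re z \<le> bb}" by (rule set_eqI) (auto simp: memO)
    ultimately show ?thesis by (simp add: open_Compl)
  qed
  have OO0: "\<Omega> \<subseteq> \<Omega>0"
  proof
    fix z assume "z \<in> \<Omega>"
    then have "Im z \<noteq> 0 \<or> Re z > bb" by (simp add: memO)
    moreover have "\<forall>t \<in> supp_S \<beta> c. t \<le> bb" unfolding S using a0 ab by auto
    ultimately show "z \<in> \<Omega>0" unfolding \<Omega>0_def using a0 ab by auto
  qed
  have nonpos: "z - of_real r \<notin> \<real>\<^sub>\<le>\<^sub>0" if "z \<in> \<Omega>" "r \<le> bb" for z r
    using that memO[of z] by (auto simp: complex_nonpos_Reals_iff)
  have fholo: "f_branch \<beta> c holomorphic_on \<Omega>"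
  proof -
    have z0: "z \<noteq> 0" if "z \<in> \<Omega>" for z using that memO[of z] a0 ab by auto
    have n1: "z - of_real a \<notin> \<real>\<^sub>\<le>\<^sub>0" "z - of_real bb \<notin> \<real>\<^sub>\<le>\<^sub>0" "z + of_real a \<notin> \<real>\<^sub>\<le>\<^sub>0" "z + of_real bb \<notin> \<real>\<^sub>\<le>\<^sub>0"
      if "z \<in> \<Omega>" for z
      using nonpos[OF that, of a] nonpos[OF that, of bb] nonpos[OF that, of "-a"] nonpos[OF that, of "-bb"] a0 ab
      by auto
    show ?thesis unfolding f_branch_def a_def[symmetric] bb_def[symmetric]
      using b z0 n1 by (intro holomorphic_intros) auto
  qed
  have realval: "g (of_real x) - f_branch \<beta> c (of_real x) = 0" if x: "x > bb" for x
  proof -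
    have x0: "x > 0" using x a0 ab by auto
    have "of_real x \<in> \<Omega>" using x by (simp add: memO)
    then have "of_real x \<in> \<Omega>0" using OO0 by auto
    then have Gx: "cauchy_G \<beta> c (of_real x) = of_real (2/(pi * \<beta>) * (x * pi * (1 - a * bb/x^2
         - sqrt ((x^2 - a^2) * (x^2 - bb^2))/x^2)))"
      using GH[of "of_real x"] G_real[OF b c, of x] x unfolding H_def a_def bb_def by simp
    have fx: "f_branch \<beta> c (of_real x) = of_real (2/(\<beta> * x) * (sqrt ((x^2 - a^2) * (x^2 - bb^2))))"
    proof -
      have "sqrt (x - a) * sqrt (x - bb) * sqrt (x + a) * sqrt (x + bb) = sqrt ((x^2 - a^2) * (x^2 - bb^2))"
        by (simp add: real_sqrt_mult[symmetric] power2_eq_square algebra_simps)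
      moreover have "f_branch \<beta> c (of_real x) = of_real (2/(\<beta> * x) * sqrt (x - a) * sqrt (x - bb) * sqrt (x + a) * sqrt (x + bb))"
        unfolding f_branch_def a_def[symmetric] bb_def[symmetric] using x a0 ab
        by (simp add: csqrt_of_real flip: of_real_diff of_real_add)
      ultimately show ?thesis by (simp add: mult.assoc)
    qed
    have "g (of_real x) = of_real (- (2/(pi * \<beta>) * (x * pi * (1 - a * bb/x^2
         - sqrt ((x^2 - a^2) * (x^2 - bb^2))/x^2))) + 2/\<beta> * x - 2 * c/(\<beta> * x))"
      unfolding g_def Gx by simp
    also have "\<dots> = of_real (2/(\<beta> * x) * (sqrt ((x^2 - a^2) * (x^2 - bb^2))))"
      using b x0 unfolding abc by (simp add: field_simps power2_eq_square)
    finally show ?thesis using fx by simp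
  qed
  have eqO: "g z = f_branch \<beta> c z" if z: "z \<in> \<Omega>" for z
  proof -
    have "g z - f_branch \<beta> c z = 0"
    proof (rule analytic_continuation[where f = "\<lambda>z. g z - f_branch \<beta> c z" and w = z and S = \<Omega> and U = "complex_of_real ` {bb<..}" and \<xi> = "of_real (bb+1)"])
      show "(\<lambda>z. g z - f_branch \<beta> c z) holomorphic_on \<Omega>"
        using holomorphic_on_subset[OF gholo OO0] fholo by (intro holomorphic_intros)
      show "open \<Omega>" by (rule openO)
      show "connected \<Omega>" unfolding \<Omega>_def by (rule slit_connected)
      show "complex_of_real ` {bb<..} \<subseteq> \<Omega>" by (auto simp: memO)
      show "complex_of_real (bb+1) \<in> \<Omega>" by (simp add: memO)
      show "z \<in> \<Omega>" by (rule z)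
      show "g w - f_branch \<beta> c w = 0" if "w \<in> complex_of_real ` {bb<..}" for w
        using that realval by auto
      show "complex_of_real (bb+1) islimpt complex_of_real ` {bb<..}"
        unfolding islimpt_approachable
      proof (intro allI impI)
        fix e :: real assume e: "e > 0"
        define d where "d = min (e/2) 1"
        have d: "d > 0" "d < e" using e unfolding d_def by auto
        show "\<exists>x'\<in>complex_of_real ` {bb<..}. x' \<noteq> complex_of_real (bb + 1) \<and> dist x' (complex_of_real (bb + 1)) < e"
        proof (intro bexI conjI)
          show "complex_of_real (bb + 1 + d) \<noteq> complex_of_real (bb + 1)" using d by simp
          show "dist (complex_of_real (bb + 1 + d)) (complex_of_real (bb + 1)) < e"
            using d by (simp add: dist_norm flip: of_real_diff)
          show "complex_of_real (bb + 1 + d) \<in> complex_of_real ` {bb<..}" using d by (intro imageI) auto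
        qed
      qed
    qed
    then show ?thesis by simp
  qed
  show ?thesis
  proof (intro exI[of _ g] conjI ballI)
    show "g holomorphic_on (- (complex_of_real ` supp_S \<beta> c \<union> {0}))" using gholo unfolding \<Omega>0_def .
    show "g z = f_branch \<beta> c z" if "z \<in> - (complex_of_real ` {..edge_b \<beta> c})" for z
      using eqO that unfolding \<Omega>_def bb_def by blast
    show "cauchy_G \<beta> c z = - g z + 2 / complex_of_real \<beta> * z - 2 * complex_of_real c / (complex_of_real \<beta> * z)" for z
      unfolding g_def by simp
  qed
qed


end
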